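(* Let $g$ be a nondegenerate symmetric bilinear form on $\mathbb{R}^n$, $A$ a $g$-symmetric endomorphism of $\mathbb{R}^n$, $T>0$, and let $\Phi(t)=\exp(tX)$ with $X=\begin{pmatrix}0&g^{-1}\\ gA&0\end{pmatrix}$ acting on $\mathbb{R}^n\oplus(\mathbb{R}^n)^*$. Assume $\mathrm{Ker}(A)=\{0\}$. Then the set of instants $t\in\left]0,T\right]$ at which the graph $\mathrm{Gr}(\Phi(t))$ is not transversal to the diagonal $\Delta$ is finite and is equal to \[\mathcal C=\Big\{t\in\left]0,T\right]: -\frac{4k^2\pi^2}{t^2}\in\mathfrak s(A)\text{ for some }k\in\mathbb{N}\setminus\{0\}\Big\}.\] On the other hand, if $0\in\mathfrak s(A)$, this set of instants coincides with the whole interval $[0,T]$.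
   Context: $g$ is viewed as the isomorphism $v\mapsto g(\cdot,v)$ from $\mathbb{R}^n$ to $(\mathbb{R}^n)^*$; $\mathfrak s(A)$ is the complex spectrum of $A$. $\mathrm{Gr}(\Phi)=\{(x,\Phi x)\}$ is a subspace of $(\mathbb{R}^n\oplus(\mathbb{R}^n)^* )\oplus(\mathbb{R}^n\oplus(\mathbb{R}^n)^* )$, and $\Delta=\{(x,x)\}$ is the diagonal; $\mathrm{Gr}(\Phi(t))$ is transversal to $\Delta$ iff $1$ is not an eigenvalue of $\Phi(t)$. *)

theory Defs
  imports "HOL-Analysis.Analysis"
begin

primrec matpow :: "real^'m^'m \<Rightarrow> nat \<Rightarrow> real^'m^'m" where
  "matpow M 0 = mat 1"
| "matpow M (Suc k) = M ** matpow M k"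

definition mat_exp :: "real^'m^'m \<Rightarrow> real^'m^'m" where
  "mat_exp M = (\<Sum>k. (1 / fact k) *\<^sub>R matpow M k)"

definition bform :: "real^'n^'n \<Rightarrow> real^'n \<Rightarrow> real^'n \<Rightarrow> real" where
  "bform G v w = v \<bullet> (G *v w)"

definition g_symmetric :: "real^'n^'n \<Rightarrow> real^'n^'n \<Rightarrow> bool" where
  "g_symmetric G A \<longleftrightarrow> (\<forall>v w. bform G (A *v v) w = bform G v (A *v w))"

definition cspec :: "real^'n^'n \<Rightarrow> complex set" where
  "cspec A = {\<mu>. \<exists>v :: complex^'n. v \<noteq> 0 \<and> (map_matrix complex_of_real A) *v v = \<mu> *s v}"

text \<open>The endomorphism X of R^n (+) (R^n)^*: coordinates Inl i for R^n, Inr i for the dual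
basis of (R^n)^*. g viewed as the map v \<mapsto> g(.,v) has matrix G, so
X = [[0, G^{-1}], [G A, 0]].\<close>
definition Xmat :: "real^'n^'n \<Rightarrow> real^'n^'n \<Rightarrow> real^('n+'n)^('n+'n)" where
  "Xmat G A = (\<chi> i j. case (i, j) of
       (Inl a, Inr b) \<Rightarrow> matrix_inv G $ a $ b
     | (Inr a, Inl b) \<Rightarrow> (G ** A) $ a $ b
     | _ \<Rightarrow> 0)"

definition Phi :: "real^'n^'n \<Rightarrow> real^'n^'n \<Rightarrow> real \<Rightarrow> real^('n+'n)^('n+'n)" where
  "Phi G A t = mat_exp (t *\<^sub>R Xmat G A)"

definition graph :: "real^'m^'m \<Rightarrow> ((real^'m) \<times> (real^'m)) set" where
  "graph M = {(x, M *v x) | x. True}"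

definition diagonal :: "((real^'m) \<times> (real^'m)) set" where
  "diagonal = {(x, x) | x. True}"

definition transversal :: "('a::real_vector) set \<Rightarrow> 'a set \<Rightarrow> bool" where
  "transversal U V \<longleftrightarrow> {u + v | u v. u \<in> U \<and> v \<in> V} = UNIV"

end

theory Submission
  imports Defs "HOL-Computational_Algebra.Fundamental_Theorem_Algebra"
begin


lemma sum_UNIV_plus:
  "sum g (UNIV::('a::finite + 'b::finite) set) = sum (\<lambda>i. g (Inl i)) UNIV + sum (\<lambda>i. g (Inr i)) UNIV"
proof -
  have "sum g (UNIV::('a + 'b) set) = sum g (UNIV <+> UNIV)" by simp
  also have "\<dots> = sum (g \<circ> Inl) UNIV + sum (g \<circ> Inr) UNIV" by (rule sum.Plus) auto
  finally show ?thesis by (simp add: comp_def)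
qed

lemma matpow_Suc_right: "matpow M (Suc k) = matpow M k ** M"
  by (induction k) (simp_all add: matrix_mul_assoc)

lemma matpow_comm: "P ** M = M ** P \<Longrightarrow> P ** matpow M k = matpow M k ** P"
  proof (induction k)
  case (Suc k) then show ?case by (metis matpow.simps(2) matrix_mul_assoc)
qed simp

lemma matpow_entry_bound:
  fixes M :: "real^'m^'m"
  assumes "\<And>i j. \<bar>M$i$j\<bar> \<le> c"
  shows "\<bar>matpow M k $ i $ j\<bar> \<le> (real CARD('m) * c)^k"
proof (induction k arbitrary: i j)
  case 0 then show ?case by (simp add: mat_def)
next
  case (Suc k)
  have c0: "0 \<le> c" using assms[of i i] by linarith
  have "\<bar>matpow M (Suc k) $ i $ j\<bar> = \<bar>\<Sum>l\<in>UNIV. M$i$l * matpow M k $ l $ j\<bar>"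
    by (simp add: matrix_matrix_mult_def)
  also have "\<dots> \<le> (\<Sum>l\<in>UNIV. \<bar>M$i$l * matpow M k $ l $ j\<bar>)" by (rule sum_abs)
  also have "\<dots> \<le> (\<Sum>l\<in>(UNIV::'m set). c * (real CARD('m) * c)^k)"
    apply (rule sum_mono) unfolding abs_mult
    by (rule mult_mono) (use assms Suc c0 in auto)
  also have "\<dots> = (real CARD('m) * c)^Suc k" by simp
  finally show ?case .
qed

lemma norm_mat_le: "norm (M :: real^'m^'m) \<le> (\<Sum>i\<in>UNIV. \<Sum>j\<in>UNIV. \<bar>M$i$j\<bar>)"
proof -
  have "norm M \<le> (\<Sum>i\<in>UNIV. norm (M$i))"
    unfolding norm_vec_def by (rule L2_set_le_sum) simp
  also have "\<dots> \<le> (\<Sum>i\<in>UNIV. \<Sum>j\<in>UNIV. \<bar>M$i$j\<bar>)"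
    by (rule sum_mono) (rule norm_le_l1_cart)
  finally show ?thesis .
qed

lemma summable_matexp: "summable (\<lambda>k. (1 / fact k) *\<^sub>R matpow (M::real^'m^'m) k)"
proof -
  define c where "c = (\<Sum>i\<in>UNIV. \<Sum>j\<in>UNIV. \<bar>M$i$j\<bar>)"
  have cb: "\<bar>M$i$j\<bar> \<le> c" for i j
  proof -
    have "\<bar>M$i$j\<bar> \<le> (\<Sum>j\<in>UNIV. \<bar>M$i$j\<bar>)"
      by (rule member_le_sum) auto
    also have "\<dots> \<le> c" unfolding c_def
      by (rule member_le_sum[where f="\<lambda>i. \<Sum>j\<in>UNIV. \<bar>M$i$j\<bar>"]) (auto intro: sum_nonneg)
    finally show ?thesis .
  qed
  define N where "N = real CARD('m)"
  have nb: "norm ((1 / fact k) *\<^sub>R matpow M k) \<le> (N * N) * (inverse (fact k) * (N*c)^k)" for k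
  proof -
    have "norm (matpow M k) \<le> (\<Sum>i\<in>(UNIV::'m set). \<Sum>j\<in>(UNIV::'m set). (N*c)^k)"
      using norm_mat_le[of "matpow M k"] matpow_entry_bound[OF cb, of k] unfolding N_def
      by (meson order_trans sum_mono)
    also have "\<dots> = N * N * (N*c)^k" by (simp add: N_def)
    finally show ?thesis by (simp add: field_simps)
  qed
  show ?thesis
    by (rule summable_comparison_test[OF _ summable_mult[OF summable_exp]]) (use nb in auto)
qed



abbreviation cm :: "real^'m^'m \<Rightarrow> complex^'m^'m" where
  "cm M \<equiv> map_matrix complex_of_real M"

lemma cm_mult: "cm (M ** N) = cm M ** cm N"
  by (simp add: vec_eq_iff matrix_matrix_mult_def)

lemma cm_mat1: "cm (mat 1) = mat 1"
  by (simp add: vec_eq_iff mat_def)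

lemma cm_mv_mult: "cm (M ** N) *v w = cm M *v (cm N *v w)"
  by (simp add: cm_mult matrix_vector_mul_assoc)

lemma scaleR_cvec: "c *\<^sub>R (v::complex^'m) = complex_of_real c *s v"
  unfolding vec_eq_iff by (auto simp del: scaleR_conv_of_real) (simp add: scaleR_conv_of_real)

lemma cm_linear: "linear (\<lambda>M::real^'m^'m. cm M *v w)"
proof (rule linearI)
  fix b c :: "real^'m^'m"
  show "cm (b + c) *v w = cm b *v w + cm c *v w"
    by (simp add: vec_eq_iff matrix_vector_mult_def sum.distrib distrib_right)
  fix r :: real
  show "cm (r *\<^sub>R b) *v w = r *\<^sub>R (cm b *v w)"
    unfolding scaleR_cvec
    by (simp add: vec_eq_iff matrix_vector_mult_def sum_distrib_left mult.assoc del: scaleR_conv_of_real)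
qed

lemma cm_scale: "cm (c *\<^sub>R M) *v w = complex_of_real c *s (cm M *v w)"
  using linear_scale[OF cm_linear, of c M w] by (simp add: scaleR_cvec)

lemma cm_sum: "cm (sum f S) *v w = (\<Sum>s\<in>S. cm (f s) *v w)"
  using real_vector.linear_sum[OF cm_linear, of f S w] by simp

lemma cm_zero: "cm 0 *v w = 0"
  by (simp add: vec_eq_iff matrix_vector_mult_def)

lemma cm_suminf: fixes f :: "nat \<Rightarrow> real^'m^'m" shows "summable f \<Longrightarrow> cm (suminf f) *v w = (\<Sum>k. cm (f k) *v w)"
  using bounded_linear.suminf[of "\<lambda>M::real^'m^'m. cm M *v w" f] cm_linear
    linear_conv_bounded_linear by blast

lemma cm_matpow_eig: "cm M *v w = l *s w \<Longrightarrow> cm (matpow M k) *v w = (l^k) *s w"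
proof (induction k)
  case 0 then show ?case by (simp add: cm_mat1)
next
  case (Suc k)
  then show ?case by (simp add: cm_mv_mult vector_scalar_commute)
qed

lemma mexp_eig:
  assumes "cm M *v w = l *s w"
  shows "cm (mat_exp M) *v w = exp l *s w"
proof -
  have "cm (mat_exp M) *v w = (\<Sum>k. cm ((1 / fact k) *\<^sub>R matpow M k) *v w)"
    unfolding mat_exp_def by (rule cm_suminf[OF summable_matexp])
  also have "\<dots> = (\<Sum>k. (l^k /\<^sub>R fact k) *s w)"
    apply (intro arg_cong[where f=suminf] ext)
    apply (simp only: cm_scale cm_matpow_eig[OF assms] vector_smult_assoc)
    apply (simp add: scaleR_conv_of_real field_simps)
    done
  also have "\<dots> = (\<Sum>k. l^k /\<^sub>R fact k) *s w"
  proof -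
    have bl: "bounded_linear (\<lambda>c::complex. c *s w)"
      unfolding linear_conv_bounded_linear[symmetric]
    proof (rule linearI)
      fix b c :: complex and r :: real
      show "(b + c) *s w = b *s w + c *s w" by (rule vector_sadd_rdistrib)
      show "(r *\<^sub>R b) *s w = r *\<^sub>R (b *s w)"
        by (simp only: scaleR_cvec vector_smult_assoc scaleR_conv_of_real[of r b])
    qed
    show ?thesis
      using bounded_linear.suminf[OF bl summable_exp_generic[of l]] by simp
  qed
  also have "\<dots> = exp l *s w" by (simp add: exp_def)
  finally show ?thesis .
qed

lemma mexp_comm: "mat_exp M ** M = M ** (mat_exp (M::real^'m^'m))"
proof -
  have bl1: "bounded_linear (\<lambda>P::real^'m^'m. P ** M)"
    unfolding linear_conv_bounded_linear[symmetric]
    by (rule linearI) (simp_all add: vec_eq_iff matrix_matrix_mult_def sum.distrib distrib_right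
      scaleR_sum_right sum_distrib_left algebra_simps)
  have bl2: "bounded_linear (\<lambda>P::real^'m^'m. M ** P)"
    unfolding linear_conv_bounded_linear[symmetric]
    by (rule linearI) (simp_all add: vec_eq_iff matrix_matrix_mult_def sum.distrib distrib_left
      scaleR_sum_right sum_distrib_left algebra_simps)
  have "mat_exp M ** M = (\<Sum>k. ((1 / fact k) *\<^sub>R matpow M k) ** M)"
    unfolding mat_exp_def by (rule bounded_linear.suminf[OF bl1 summable_matexp])
  also have "\<dots> = (\<Sum>k. M ** ((1 / fact k) *\<^sub>R matpow M k))"
    by (simp add: matrix_scalar_ac scalar_matrix_assoc[symmetric] matpow_comm[of M M, symmetric])
  also have "\<dots> = M ** mat_exp M"
    unfolding mat_exp_def by (rule bounded_linear.suminf[OF bl2 summable_matexp, symmetric])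
  finally show ?thesis .
qed



definition pv :: "complex poly \<Rightarrow> real^'m^'m \<Rightarrow> complex^'m \<Rightarrow> complex^'m" where
  "pv p M u = (\<Sum>i\<le>degree p. coeff p i *s (cm (matpow M i) *v u))"

lemma mv_sum: "(A::complex^'m^'m) *v sum f S = (\<Sum>x\<in>S. A *v f x)"
  using real_vector.linear_sum[OF matrix_vector_mul_linear, of A f S] by simp

lemma smult_sum: "(c::complex) *s sum f S = (\<Sum>x\<in>S. c *s f x)"
  by (simp add: vec_eq_iff sum_component sum_distrib_left)

lemma pv_bound:
  assumes "degree p \<le> n"
  shows "pv p M u = (\<Sum>i\<le>n. coeff p i *s (cm (matpow M i) *v u))"
  unfolding pv_def
  by (rule sum.mono_neutral_left) (use assms in \<open>auto simp: not_le coeff_eq_0\<close>)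

lemma pv_add: "pv (p + q) M u = pv p M u + pv q M u"
proof -
  define n where "n = max (degree p) (degree q)"
  have "degree (p + q) \<le> n" "degree p \<le> n" "degree q \<le> n"
    unfolding n_def using degree_add_le_max[of p q] by auto
  then show ?thesis
    by (simp add: pv_bound[of _ n] vector_sadd_rdistrib sum.distrib)
qed

lemma pv_smult: "pv (smult c p) M u = c *s pv p M u"
proof -
  have "degree (smult c p) \<le> degree p" by simp
  then show ?thesis
    by (simp add: pv_bound[of _ "degree p"] smult_sum vector_smult_assoc)
qed

lemma pv_pCons0: "pv (pCons 0 q) M u = cm M *v pv q M u"
proof -
  have "degree (pCons 0 q) \<le> Suc (degree q)" by (simp add: degree_pCons_le)
  then have "pv (pCons 0 q) M u = (\<Sum>i\<le>Suc (degree q). coeff (pCons 0 q) i *s (cm (matpow M i) *v u))"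
    by (rule pv_bound)
  also have "\<dots> = (\<Sum>i\<le>degree q. coeff q i *s (cm (matpow M (Suc i)) *v u))"
    by (subst sum.atMost_Suc_shift) simp
  also have "\<dots> = cm M *v pv q M u"
    by (simp add: pv_def mv_sum vector_scalar_commute cm_mv_mult)
  finally show ?thesis .
qed

lemma pv_factor: "pv ([:-r,1:] * q) M u = cm M *v pv q M u - r *s pv q M u"
proof -
  have "[:-r,1:] * q = pCons 0 q + smult (-r) q" by simp
  then have "pv ([:-r,1:] * q) M u = cm M *v pv q M u + (-r) *s pv q M u"
    by (simp only: pv_add pv_smult pv_pCons0)
  then show ?thesis by (simp add: vector_smult_lneg)
qed

lemma pv_const: "pv [:c:] M u = c *s u"
  by (simp add: pv_def cm_mat1)

lemma pv_comm:
  assumes "P ** M = M ** P"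
  shows "cm P *v pv q M u = pv q M (cm P *v u)"
proof -
  have "cm P *v (cm (matpow M i) *v u) = cm (matpow M i) *v (cm P *v u)" for i
    by (simp add: cm_mv_mult[symmetric] matpow_comm[OF assms])
  then show ?thesis by (simp add: pv_def mv_sum vector_scalar_commute)
qed

lemma eig_extract:
  fixes M P :: "real^'m^'m"
  assumes comm: "P ** M = M ** P" and hfix: "cm P *v u = u"
  shows "p \<noteq> 0 \<Longrightarrow> pv p M u = 0 \<Longrightarrow> u \<noteq> 0 \<Longrightarrow>
     \<exists>r w. w \<noteq> 0 \<and> cm M *v w = r *s w \<and> cm P *v w = w"
proof (induction "degree p" arbitrary: p rule: less_induct)
  case less
  show ?case
  proof (cases "degree p = 0")
    case True
    then obtain c where "p = [:c:]" by (metis degree_eq_zeroE)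
    with less.prems show ?thesis by (auto simp: pv_const vec_eq_iff)
  next
    case False
    then obtain r where "poly p r = 0"
      using fundamental_theorem_of_algebra[of p] constant_degree[of p] by metis
    then obtain q where pq: "p = [:-r,1:] * q"
      using poly_eq_0_iff_dvd by (metis dvdE)
    with less.prems have q0: "q \<noteq> 0" by auto
    have "degree p = degree [:-r,1:] + degree q"
      unfolding pq by (rule degree_mult_eq) (use q0 in auto)
    then have dq: "degree q < degree p" by simp
    show ?thesis
    proof (cases "pv q M u = 0")
      case True
      then show ?thesis using less.hyps[OF dq q0 True less.prems(3)] by blast
    next
      case False
      have "cm M *v pv q M u = r *s pv q M u"
        using less.prems(2) unfolding pq pv_factor by simp
      moreover have "cm P *v pv q M u = pv q M u"
        by (simp add: pv_comm[OF comm] hfix)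
      ultimately show ?thesis using False by blast
    qed
  qed
qed



lemma matpow_dep:
  fixes M :: "real^'m^'m"
  shows "\<exists>c D. (\<exists>k\<le>D. c k \<noteq> 0) \<and> (\<Sum>k\<le>D. c k *\<^sub>R matpow M k) = 0"
proof -
  define D where "D = DIM(real^'m^'m)"
  show ?thesis
  proof (cases "inj_on (matpow M) {..D}")
    case False
    then obtain i j where ij: "i \<le> D" "j \<le> D" "i \<noteq> j" "matpow M i = matpow M j"
      unfolding inj_on_def by auto
    define c where "c = (\<lambda>k. if k = i then 1 else if k = j then -1 else (0::real))"
    have "(\<Sum>k\<le>D. c k *\<^sub>R matpow M k) = (\<Sum>k\<in>{i,j}. c k *\<^sub>R matpow M k)"
      by (rule sum.mono_neutral_right) (use ij in \<open>auto simp: c_def\<close>)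
    also have "\<dots> = 0" using ij by (simp add: c_def)
    finally show ?thesis using ij by (intro exI[of _ c] exI[of _ D]) (auto simp: c_def)
  next
    case True
    define S where "S = matpow M ` {..D}"
    have cS: "card S = Suc D" unfolding S_def using card_image[OF True] by simp
    have fS: "finite S" unfolding S_def by simp
    have "\<not> independent S"
      using independent_bound[of S] cS unfolding D_def by auto
    then obtain a where a: "(\<Sum>v\<in>S. a v *\<^sub>R v) = 0" "\<exists>v\<in>S. a v \<noteq> 0"
      using fS eucl.independent_explicit[of S] by blast
    define c where "c = (\<lambda>k. a (matpow M k))"
    have hc: "(\<Sum>k\<le>D. c k *\<^sub>R matpow M k) = (\<Sum>v\<in>S. a v *\<^sub>R v)"
      unfolding S_def c_def by (rule sum.reindex[OF True, symmetric, unfolded comp_def])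
    from a(2) obtain k where "k \<le> D" "c k \<noteq> 0" unfolding S_def c_def by auto
    then show ?thesis using a(1) hc by (intro exI[of _ c] exI[of _ D]) auto
  qed
qed

lemma annih:
  fixes M :: "real^'m^'m"
  shows "\<exists>p::complex poly. p \<noteq> 0 \<and> (\<forall>u. pv p M u = 0)"
proof -
  obtain c D where cD: "\<exists>k\<le>D. c k \<noteq> 0" "(\<Sum>k\<le>D. c k *\<^sub>R matpow M k) = 0"
    using matpow_dep by blast
  define p where "p = (\<Sum>k\<le>D. monom (complex_of_real (c k)) k)"
  have cp: "coeff p i = (if i \<le> D then complex_of_real (c i) else 0)" for i
    unfolding p_def coeff_sum coeff_monom by (simp add: sum.delta)
  have dp: "degree p \<le> D" by (rule degree_le) (simp add: cp)
  have "p \<noteq> 0" using cD(1) cp by (metis coeff_0 of_real_eq_0_iff)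
  moreover have "pv p M u = 0" for u
  proof -
    have "pv p M u = (\<Sum>k\<le>D. complex_of_real (c k) *s (cm (matpow M k) *v u))"
      by (simp add: pv_bound[OF dp] cp)
    also have "\<dots> = cm (\<Sum>k\<le>D. c k *\<^sub>R matpow M k) *v u"
      by (simp add: cm_sum cm_scale)
    also have "\<dots> = 0" by (simp add: cD(2) cm_zero)
    finally show ?thesis .
  qed
  ultimately show ?thesis by blast
qed

lemma pv_eig:
  assumes "cm M *v v = \<mu> *s v" shows "pv p M v = poly p \<mu> *s v"
proof -
  have "pv p M v = (\<Sum>i\<le>degree p. coeff p i *s (\<mu>^i *s v))"
    unfolding pv_def by (simp only: cm_matpow_eig[OF assms])
  also have "\<dots> = poly p \<mu> *s v"
    by (simp add: poly_altdef vec_eq_iff sum_component sum_distrib_right mult.assoc)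
  finally show ?thesis .
qed

lemma cspec_finite: "finite (cspec A)"
proof -
  obtain p where p: "p \<noteq> 0" "\<forall>u. pv p A u = 0" using annih by blast
  have "cspec A \<subseteq> {x. poly p x = 0}"
  proof
    fix \<mu> assume "\<mu> \<in> cspec A"
    then obtain v where v: "v \<noteq> 0" "cm A *v v = \<mu> *s v" unfolding cspec_def by blast
    have "poly p \<mu> *s v = 0" using p(2) pv_eig[OF v(2), of p] by simp
    with v(1) show "\<mu> \<in> {x. poly p x = 0}" by (auto simp: vec_eq_iff)
  qed
  then show ?thesis using poly_roots_finite[OF p(1)] finite_subset by blast
qed



definition cv :: "real^'m \<Rightarrow> complex^'m" where "cv x = (\<chi> i. complex_of_real (x$i))"
definition rv :: "complex^'m \<Rightarrow> real^'m" where "rv w = (\<chi> i. Re (w$i))"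
definition iv :: "complex^'m \<Rightarrow> real^'m" where "iv w = (\<chi> i. Im (w$i))"

lemma rv_mv: "rv (cm M *v w) = M *v rv w"
  by (simp add: rv_def vec_eq_iff matrix_vector_mult_def Re_sum mult.commute)

lemma iv_mv: "iv (cm M *v w) = M *v iv w"
  by (simp add: iv_def vec_eq_iff matrix_vector_mult_def Im_sum mult.commute)

lemma cv_mv: "cm M *v cv x = cv (M *v x)"
  by (simp add: cv_def vec_eq_iff matrix_vector_mult_def)

lemma cv_eq0: "cv x = 0 \<longleftrightarrow> x = 0"
  by (simp add: cv_def vec_eq_iff)

lemma rv_iv_nz: "w \<noteq> 0 \<Longrightarrow> rv w \<noteq> 0 \<or> iv w \<noteq> 0"
  by (auto simp: rv_def iv_def vec_eq_iff complex_eq_iff)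

lemma fixed_complex_real:
  "(\<exists>w::complex^'m. w \<noteq> 0 \<and> cm M *v w = w) \<longleftrightarrow> (\<exists>x. x \<noteq> 0 \<and> M *v x = x)"
proof
  assume "\<exists>w::complex^'m. w \<noteq> 0 \<and> cm M *v w = w"
  then obtain w :: "complex^'m" where w: "w \<noteq> 0" "cm M *v w = w" by blast
  have "M *v rv w = rv w" "M *v iv w = iv w"
    using rv_mv[of M w] iv_mv[of M w] w(2) by simp_all
  then show "\<exists>x. x \<noteq> 0 \<and> M *v x = x" using rv_iv_nz[OF w(1)] by metis
next
  assume "\<exists>x. x \<noteq> 0 \<and> M *v x = x"
  then obtain x where "x \<noteq> 0" "M *v x = x" by blast
  then show "\<exists>w::complex^'m. w \<noteq> 0 \<and> cm M *v w = w"
    by (intro exI[of _ "cv x"]) (simp add: cv_mv cv_eq0)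
qed

lemma transversal_iff:
  "transversal (graph (M::real^'m^'m)) diagonal \<longleftrightarrow> \<not>(\<exists>x. x \<noteq> 0 \<and> M *v x = x)"
proof -
  define L where "L = (\<lambda>y. M *v y - y)"
  have lin: "linear L" unfolding L_def
    by (intro linear_compose_sub matrix_vector_mul_linear linear_ident)
  have sumset: "{u + v |u v. u \<in> graph M \<and> v \<in> diagonal} = {(y + z, M *v y + z) | y z. True}"
    unfolding graph_def diagonal_def by force
  show ?thesis
  proof
    assume tr: "transversal (graph M) diagonal"
    show "\<not>(\<exists>x. x \<noteq> 0 \<and> M *v x = x)"
    proof
      assume "\<exists>x. x \<noteq> 0 \<and> M *v x = x"
      then obtain x where x: "x \<noteq> 0" "M *v x = x" by blast
      have "L x = L 0" using x by (simp add: L_def)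
      then have "\<not> inj L" using x(1) by (metis injD)
      then have "\<not> surj L" using linear_surjective_imp_injective[OF lin] by blast
      then obtain b where b: "b \<notin> range L" by blast
      have "(0, b) \<in> {(y + z, M *v y + z) | y z. True}"
        using tr unfolding transversal_def sumset by blast
      then obtain y z where "0 = y + z" "b = M *v y + z" by blast
      then have "b = L y" unfolding L_def by (simp add: eq_neg_iff_add_eq_0 add.commute)
      with b show False by blast
    qed
  next
    assume nf: "\<not>(\<exists>x. x \<noteq> 0 \<and> M *v x = x)"
    have "inj L"
    proof (rule linear_injective_0[OF lin, THEN iffD2], intro allI impI)
      fix x assume "L x = 0" then show "x = 0" using nf unfolding L_def by auto
    qed
    then have sL: "surj L" using linear_injective_imp_surjective[OF lin] by blast
    have "p \<in> {(y + z, M *v y + z) | y z. True}" for p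
    proof -
      obtain a b where p: "p = (a, b)" by fastforce
      obtain y where "L y = b - a" using sL by (metis surjD)
      then have "p = (y + (a - y), M *v y + (a - y))" unfolding p L_def by (simp add: algebra_simps)
      then show ?thesis by blast
    qed
    then show "transversal (graph M) diagonal" unfolding transversal_def sumset by blast
  qed
qed



lemma inv_G:
  assumes "invertible (G::real^'n^'n)"
  shows "G ** matrix_inv G = mat 1" "matrix_inv G ** G = mat 1"
  using someI_ex[OF assms[unfolded invertible_def]] unfolding matrix_inv_def by auto

lemma X_apply:
  fixes w :: "complex^('n::finite+'n)"
  shows "(cm (Xmat G A) *v w) $ Inl j = (cm (matrix_inv G) *v (\<chi> k. w $ Inr k)) $ j"
    and "(cm (Xmat G A) *v w) $ Inr j = (cm (G ** A) *v (\<chi> k. w $ Inl k)) $ j"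
  by (simp_all add: matrix_vector_mult_def sum_UNIV_plus Xmat_def)

lemma vec_plus_eqI:
  fixes w v :: "'a^('n::finite+'n)"
  assumes "\<And>j. w $ Inl j = v $ Inl j" "\<And>j. w $ Inr j = v $ Inr j"
  shows "w = v"
  unfolding vec_eq_iff by (metis assms sum.exhaust)

lemma eig_X_to_A:
  fixes G A :: "real^'n^'n" and w :: "complex^('n::finite+'n)"
  assumes G: "invertible G" and w: "w \<noteq> 0" "cm (Xmat G A) *v w = r *s w"
  shows "r^2 \<in> cspec A"
proof -
  define a where "a = (\<chi> k. w $ Inl k)"
  define b where "b = (\<chi> k. w $ Inr k)"
  have h1: "cm (matrix_inv G) *v b = r *s a"
    unfolding vec_eq_iff a_def b_def using w(2) X_apply(1)[of G A w]
    by (metis vec_lambda_beta vector_smult_component)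
  have h2: "cm (G ** A) *v a = r *s b"
    unfolding vec_eq_iff a_def b_def using w(2) X_apply(2)[of G A w]
    by (metis vec_lambda_beta vector_smult_component)
  have bG: "b = cm G *v (cm (matrix_inv G) *v b)"
    by (simp add: cm_mv_mult[symmetric] inv_G[OF G] cm_mat1)
  have "a \<noteq> 0"
  proof
    assume a0: "a = 0"
    then have "b = 0" using bG h1 by simp
    with a0 have "w = 0"
      by (intro vec_plus_eqI) (auto simp: a_def b_def vec_eq_iff)
    with w(1) show False by simp
  qed
  moreover have "cm A *v a = r^2 *s a"
  proof -
    have "cm A *v a = cm (matrix_inv G) *v (cm (G ** A) *v a)"
      by (simp add: cm_mv_mult[symmetric] matrix_mul_assoc inv_G[OF G])
    also have "\<dots> = r *s (r *s a)" by (simp add: h2 vector_scalar_commute h1)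
    finally show ?thesis by (simp add: vector_smult_assoc power2_eq_square)
  qed
  ultimately show ?thesis unfolding cspec_def by blast
qed

lemma eig_A_to_X:
  fixes G A :: "real^'n^'n" and a :: "complex^'n"
  assumes G: "invertible G" and a: "a \<noteq> 0" "cm A *v a = r^2 *s a"
  shows "\<exists>w::complex^('n::finite+'n). w \<noteq> 0 \<and> cm (Xmat G A) *v w = r *s w"
proof -
  define w :: "complex^('n::finite+'n)" where
    "w = (\<chi> i. case i of Inl k \<Rightarrow> a $ k | Inr k \<Rightarrow> (r *s (cm G *v a)) $ k)"
  have wl: "(\<chi> k. w $ Inl k) = a" by (simp add: w_def vec_eq_iff)
  have wr: "(\<chi> k. w $ Inr k) = r *s (cm G *v a)" by (simp add: w_def vec_eq_iff)
  have "w \<noteq> 0"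
  proof
    assume "w = 0" then have "(\<chi> k. w $ Inl k) = 0" by (simp add: vec_eq_iff)
    with wl a(1) show False by simp
  qed
  moreover have "cm (Xmat G A) *v w = r *s w"
  proof (rule vec_plus_eqI)
    fix j
    have "cm (matrix_inv G) *v (r *s (cm G *v a)) = r *s a"
      by (simp add: vector_scalar_commute cm_mv_mult[symmetric] inv_G[OF G] cm_mat1)
    then show "(cm (Xmat G A) *v w) $ Inl j = (r *s w) $ Inl j"
      by (simp add: X_apply wr) (simp add: w_def)
    have "cm (G ** A) *v a = r *s (r *s (cm G *v a))"
      by (simp add: cm_mv_mult a(2) vector_scalar_commute vector_smult_assoc power2_eq_square)
    then show "(cm (Xmat G A) *v w) $ Inr j = (r *s w) $ Inr j"
      by (simp add: X_apply wl) (simp add: w_def)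
  qed
  ultimately show ?thesis by blast
qed



lemma NT_iff:
  "(\<not> transversal (graph (Phi G A t)) diagonal) \<longleftrightarrow>
   (\<exists>w::complex^('n::finite+'n). w \<noteq> 0 \<and> cm (Phi G A t) *v w = w)"
  using transversal_iff[of "Phi G A t"] fixed_complex_real[of "Phi G A t"] by simp

lemma fix_of_eig:
  fixes G A :: "real^'n::finite^'n"
  assumes G: "invertible G" and a: "a \<noteq> 0" "cm A *v a = r^2 *s a"
    and e: "exp (complex_of_real t * r) = 1"
  shows "\<not> transversal (graph (Phi G A t)) diagonal"
proof -
  obtain w :: "complex^('n+'n)" where w: "w \<noteq> 0" "cm (Xmat G A) *v w = r *s w"
    using eig_A_to_X[OF G a] by blast
  have "cm (t *\<^sub>R Xmat G A) *v w = (complex_of_real t * r) *s w"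
    by (simp add: cm_scale w(2) vector_smult_assoc)
  from mexp_eig[OF this] have "cm (Phi G A t) *v w = w" by (simp add: Phi_def e)
  with w(1) show ?thesis unfolding NT_iff by blast
qed

lemma eig_of_fix:
  fixes G A :: "real^'n::finite^'n"
  assumes G: "invertible G" and t: "t \<noteq> 0"
    and nt: "\<not> transversal (graph (Phi G A t)) diagonal"
  shows "\<exists>r. exp (complex_of_real t * r) = 1 \<and> r^2 \<in> cspec A"
proof -
  define M where "M = t *\<^sub>R Xmat G A"
  obtain u :: "complex^('n+'n)" where u: "u \<noteq> 0" "cm (Phi G A t) *v u = u"
    using nt unfolding NT_iff by blast
  have comm: "Phi G A t ** M = M ** Phi G A t"
    unfolding Phi_def M_def by (rule mexp_comm)
  obtain p where p: "p \<noteq> 0" "\<forall>u. pv p M u = 0" using annih by blast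
  obtain r' w where rw: "w \<noteq> 0" "cm M *v w = r' *s w" "cm (Phi G A t) *v w = w"
    using eig_extract[OF comm u(2) p(1) _ u(1)] p(2) by blast
  have "cm (Phi G A t) *v w = exp r' *s w"
    unfolding Phi_def M_def[symmetric] by (rule mexp_eig[OF rw(2)])
  with rw(3) have "exp r' *s w = 1 *s w" by simp
  with rw(1) have er: "exp r' = 1" by (auto simp: vec_eq_iff)
  define r where "r = r' / complex_of_real t"
  have "complex_of_real t *s (cm (Xmat G A) *v w) = (complex_of_real t * r) *s w"
    using rw(2) t unfolding M_def r_def by (simp add: cm_scale)
  then have "\<forall>i. complex_of_real t * (cm (Xmat G A) *v w) $ i = complex_of_real t * (r * w $ i)"
    by (simp add: vec_eq_iff mult.assoc)
  then have "cm (Xmat G A) *v w = r *s w"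
    using t by (simp add: vec_eq_iff)
  then have "r^2 \<in> cspec A" by (rule eig_X_to_A[OF G rw(1)])
  moreover have "exp (complex_of_real t * r) = 1" using er t by (simp add: r_def)
  ultimately show ?thesis by blast
qed



lemma zero_notin:
  assumes "{x. A *v x = 0} = {0}"
  shows "0 \<notin> cspec A"
proof
  assume "0 \<in> cspec A"
  then obtain v where v: "v \<noteq> 0" "cm A *v v = 0" unfolding cspec_def by auto
  have "A *v rv v = 0" "A *v iv v = 0" using rv_mv[of A v] iv_mv[of A v] v(2)
    by (simp_all add: rv_def iv_def vec_eq_iff)
  with assms rv_iv_nz[OF v(1)] show False by blast
qed

lemma sq_imag:
  assumes "Re r = 0"
  shows "r^2 = complex_of_real (- ((Im r)^2))"
  using assms by (simp add: complex_eq_iff power2_eq_square)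

lemma charac:
  fixes G A :: "real^'n::finite^'n"
  assumes G: "invertible G" and z: "0 \<notin> cspec A" and t: "t > 0"
  shows "(\<not> transversal (graph (Phi G A t)) diagonal) \<longleftrightarrow>
     (\<exists>k::nat. k \<noteq> 0 \<and> complex_of_real (- 4 * (real k)^2 * pi^2 / t^2) \<in> cspec A)"
proof
  assume "\<not> transversal (graph (Phi G A t)) diagonal"
  then obtain r where r: "exp (complex_of_real t * r) = 1" "r^2 \<in> cspec A"
    using eig_of_fix[OF G] t by (metis less_irrefl)
  from r(1) obtain n :: int where n: "Re (complex_of_real t * r) = 0"
    "Im (complex_of_real t * r) = of_int (2 * n) * pi"
    unfolding exp_eq_1 by blast
  have re: "Re r = 0" using n(1) t by simp
  have im: "Im r = 2 * of_int n * pi / t" using n(2) t by (simp add: field_simps)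
  have r2: "r^2 = complex_of_real (- ((2 * of_int n * pi / t)^2))"
    using sq_imag[OF re] im by simp
  have "n \<noteq> 0"
  proof
    assume "n = 0" then have "r^2 = 0" using r2 by simp
    with r(2) z show False by simp
  qed
  define k where "k = nat \<bar>n\<bar>"
  have "k \<noteq> 0" using \<open>n \<noteq> 0\<close> by (simp add: k_def)
  have rk: "real k = \<bar>of_int n\<bar>" by (simp add: k_def)
  have "- ((2 * of_int n * pi / t)^2) = - 4 * (real k)^2 * pi^2 / t^2"
    unfolding rk by (simp add: power2_eq_square field_simps)
  then show "\<exists>k::nat. k \<noteq> 0 \<and> complex_of_real (- 4 * (real k)^2 * pi^2 / t^2) \<in> cspec A"
    using r(2) r2 \<open>k \<noteq> 0\<close> by metis
next
  assume "\<exists>k::nat. k \<noteq> 0 \<and> complex_of_real (- 4 * (real k)^2 * pi^2 / t^2) \<in> cspec A"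
  then obtain k :: nat where k: "k \<noteq> 0" "complex_of_real (- 4 * (real k)^2 * pi^2 / t^2) \<in> cspec A"
    by blast
  define r where "r = \<i> * complex_of_real (2 * real k * pi / t)"
  have "r^2 = complex_of_real (- ((Im r)^2))"
    by (rule sq_imag) (simp add: r_def)
  also have "Im r = 2 * real k * pi / t" by (simp add: r_def)
  also have "- ((2 * real k * pi / t)^2) = - 4 * (real k)^2 * pi^2 / t^2"
    by (simp add: power2_eq_square field_simps)
  finally have r2: "r^2 \<in> cspec A" using k(2) by simp
  then obtain a where a: "a \<noteq> 0" "cm A *v a = r^2 *s a" unfolding cspec_def by blast
  have "exp (complex_of_real t * r) = 1"
    unfolding exp_eq_1 using t
    by (intro conjI exI[of _ "int k"]) (simp_all add: r_def)
  then show "\<not> transversal (graph (Phi G A t)) diagonal"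
    by (rule fix_of_eig[OF G a])
qed

lemma finite_C:
  fixes A :: "real^'n::finite^'n" and T :: real
  shows "finite {t \<in> {0<..T}. \<exists>k::nat. k \<noteq> 0 \<and>
               complex_of_real (- 4 * (real k)^2 * pi^2 / t^2) \<in> cspec A}"
proof -
  define F where "F = (\<lambda>\<mu>::complex. (\<lambda>k::nat. 2 * real k * pi / sqrt (- Re \<mu>)) `
                         {..nat \<lceil>T * sqrt (- Re \<mu>) / (2 * pi)\<rceil>})"
  have "{t \<in> {0<..T}. \<exists>k::nat. k \<noteq> 0 \<and>
               complex_of_real (- 4 * (real k)^2 * pi^2 / t^2) \<in> cspec A} \<subseteq> (\<Union>\<mu>\<in>cspec A. F \<mu>)"
  proof
    fix t assume "t \<in> {t \<in> {0<..T}. \<exists>k::nat. k \<noteq> 0 \<and>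
               complex_of_real (- 4 * (real k)^2 * pi^2 / t^2) \<in> cspec A}"
    then obtain k :: nat where t: "0 < t" "t \<le> T" and k: "k \<noteq> 0"
      "complex_of_real (- 4 * (real k)^2 * pi^2 / t^2) \<in> cspec A" by auto
    define \<mu> where "\<mu> = complex_of_real (- 4 * (real k)^2 * pi^2 / t^2)"
    have m: "- Re \<mu> = (2 * real k * pi / t)^2"
      by (simp add: \<mu>_def power2_eq_square field_simps)
    have pos: "0 < 2 * real k * pi / t" using k t by simp
    have s: "sqrt (- Re \<mu>) = 2 * real k * pi / t"
      unfolding m using pos t by simp
    have sp: "sqrt (- Re \<mu>) > 0" using pos s by simp
    have tk: "t = 2 * real k * pi / sqrt (- Re \<mu>)"
      using s t sp by (simp add: field_simps)
    have "real k = t * sqrt (- Re \<mu>) / (2 * pi)" using s t by (simp add: field_simps)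
    also have "\<dots> \<le> T * sqrt (- Re \<mu>) / (2 * pi)"
      using t sp by (intro divide_right_mono mult_right_mono) auto
    finally have "k \<le> nat \<lceil>T * sqrt (- Re \<mu>) / (2 * pi)\<rceil>"
      by linarith
    then have "t \<in> F \<mu>" unfolding F_def tk by blast
    then show "t \<in> (\<Union>\<mu>\<in>cspec A. F \<mu>)" using k(2) \<mu>_def by blast
  qed
  moreover have "finite (\<Union>\<mu>\<in>cspec A. F \<mu>)"
    using cspec_finite[of A] unfolding F_def by blast
  ultimately show ?thesis by (rule finite_subset)
qed

theorem lemma5p2:
  fixes G A :: "real^'n^'n" and T :: real
  assumes "transpose G = G" and "invertible G"
    and "g_symmetric G A"
    and "T > 0"
  shows "({x. A *v x = 0} = {0} \<longrightarrow>
            finite {t \<in> {0<..T}. \<not> transversal (graph (Phi G A t)) diagonal} \<and>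
            {t \<in> {0<..T}. \<not> transversal (graph (Phi G A t)) diagonal} =
            {t \<in> {0<..T}. \<exists>k::nat. k \<noteq> 0 \<and>
               complex_of_real (- 4 * (real k)^2 * pi^2 / t^2) \<in> cspec A})
       \<and> (0 \<in> cspec A \<longrightarrow>
            {t \<in> {0..T}. \<not> transversal (graph (Phi G A t)) diagonal} = {0..T})"
proof (intro conjI impI)
  assume ker: "{x. A *v x = 0} = {0}"
  have eq: "{t \<in> {0<..T}. \<not> transversal (graph (Phi G A t)) diagonal} =
            {t \<in> {0<..T}. \<exists>k::nat. k \<noteq> 0 \<and>
               complex_of_real (- 4 * (real k)^2 * pi^2 / t^2) \<in> cspec A}"
    using charac[OF assms(2) zero_notin[OF ker]] by auto
  then show "{t \<in> {0<..T}. \<not> transversal (graph (Phi G A t)) diagonal} =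
            {t \<in> {0<..T}. \<exists>k::nat. k \<noteq> 0 \<and>
               complex_of_real (- 4 * (real k)^2 * pi^2 / t^2) \<in> cspec A}" .
  show "finite {t \<in> {0<..T}. \<not> transversal (graph (Phi G A t)) diagonal}"
    unfolding eq by (rule finite_C)
next
  assume "0 \<in> cspec A"
  then obtain a where a: "a \<noteq> 0" "cm A *v a = 0 *s a" unfolding cspec_def by blast
  have a2: "cm A *v a = 0^2 *s a" using a(2) by simp
  have "\<not> transversal (graph (Phi G A t)) diagonal" for t
    by (rule fix_of_eig[OF assms(2) a(1) a2]) simp
  then show "{t \<in> {0..T}. \<not> transversal (graph (Phi G A t)) diagonal} = {0..T}" by blast
qed

end
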